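(* Let $K\ge2$, $0<q<p$ with $p+(K-1)q=1$. Each of the four estimators $\mathrm{Inv}$, $\mathrm{InvP}$, $\mathrm{InvN}$, $\mathrm{MLE}^*$ is consistent: for every $\theta\in\Delta$, if $\hat\theta$ denotes any of them, $\hat\theta(\phi^{(N)})\to\theta$ in probability as $N\to\infty$. Moreover, for $\hat\theta\in\{\mathrm{Inv},\mathrm{InvP}\}$, the mean squared error satisfies $\mathbb{E}\|\hat\theta(\phi^{(N)})-\theta\|_2^2=O(K/N)$, i.e. there is a constant $C$ depending only on $p,q$ such that $\mathbb{E}\|\hat\theta(\phi^{(N)})-\theta\|_2^2\le CK/N$ for all $\theta\in\Delta$ and $N\ge1$.
   Context: $\Delta=\{\theta\in\mathbb{R}^K:\theta_i\ge0,\sum_i\theta_i=1\}$. Randomized response: on input $x\in\{1,\dots,K\}$, outputs $y$ with probability $p$ if $y=x$, $q$ otherwise. For $\theta\in\Delta$, let $X_1,X_2,\dots$ be i.i.d. with distribution $\theta$, $Y_u$ the output of randomized response on $X_u$ (independent randomness), and $\phi^{(N)}$ the empirical histogram of $Y_1,\dots,Y_N$: $\phi^{(N)}_y=\frac1N|\{u\le N:Y_u=y\}|$. Estimators: $\mathrm{Inv}(\phi)_i=\frac{\phi_i-q}{p-q}$; $\mathrm{InvN}(\phi)_i=\frac{\max(0,\mathrm{Inv}(\phi)_i)}{\sum_j\max(0,\mathrm{Inv}(\phi)_j)}$; $\mathrm{InvP}(\phi)=\arg\min_{\theta'\in\Delta}\|\theta'-\mathrm{Inv}(\phi)\|_2$.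 $\mathrm{MLE}^*(\phi)$: for real $\tau$ let $m(\tau)=|\{i:\phi_i<\tau\}|$, $c_\tau=\frac{1-m(\tau)q}{\sum_{i:\phi_i\ge\tau}\phi_i}$; let $\tau^*$ be the smallest $\tau\in\{\phi_1,\dots,\phi_K\}$ with $c_\tau\phi_i\ge q$ for all $i$ with $\phi_i\ge\tau$; $\mathrm{MLE}^*(\phi)_i=0$ if $\phi_i<\tau^*$ and $\frac{c_{\tau^*}\phi_i-q}{p-q}$ otherwise. *)

theory Defs
  imports "HOL-Probability.Probability"
begin

(* Indices are 0..K-1 (instead of 1..K); vectors in R^K are functions nat => real,
   only the coordinates i < K are meaningful. *)

definition prob_simplex :: "nat \<Rightarrow> (nat \<Rightarrow> real) set" where
  "prob_simplex K = {\<theta>. (\<forall>i<K. 0 \<le> \<theta> i) \<and> (\<Sum>i<K. \<theta> i) = 1}"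

definition cat_pmf :: "nat \<Rightarrow> (nat \<Rightarrow> real) \<Rightarrow> nat pmf" where
  "cat_pmf K \<theta> = embed_pmf (\<lambda>i. if i < K then \<theta> i else 0)"

definition rr_pmf :: "nat \<Rightarrow> real \<Rightarrow> real \<Rightarrow> nat \<Rightarrow> nat pmf" where
  "rr_pmf K p q x = embed_pmf (\<lambda>y. if y < K then (if y = x then p else q) else 0)"

definition out_pmf :: "nat \<Rightarrow> real \<Rightarrow> real \<Rightarrow> (nat \<Rightarrow> real) \<Rightarrow> nat pmf" where
  "out_pmf K p q \<theta> = bind_pmf (cat_pmf K \<theta>) (rr_pmf K p q)"

fun iid_pmf :: "nat \<Rightarrow> 'a pmf \<Rightarrow> 'a list pmf" where
  "iid_pmf 0 D = return_pmf []"
| "iid_pmf (Suc n) D = bind_pmf D (\<lambda>x. bind_pmf (iid_pmf n D) (\<lambda>xs. return_pmf (x # xs)))"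

definition hist :: "nat list \<Rightarrow> nat \<Rightarrow> real" where
  "hist ys y = real (length (filter (\<lambda>z. z = y) ys)) / real (length ys)"

definition phi_pmf :: "nat \<Rightarrow> real \<Rightarrow> real \<Rightarrow> (nat \<Rightarrow> real) \<Rightarrow> nat \<Rightarrow> (nat \<Rightarrow> real) pmf" where
  "phi_pmf K p q \<theta> N = map_pmf hist (iid_pmf N (out_pmf K p q \<theta>))"

definition sqdist :: "nat \<Rightarrow> (nat \<Rightarrow> real) \<Rightarrow> (nat \<Rightarrow> real) \<Rightarrow> real" where
  "sqdist K a b = (\<Sum>i<K. (a i - b i)^2)"

definition Inv :: "nat \<Rightarrow> real \<Rightarrow> real \<Rightarrow> (nat \<Rightarrow> real) \<Rightarrow> nat \<Rightarrow> real" where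
  "Inv K p q \<phi> = (\<lambda>i. (\<phi> i - q) / (p - q))"

definition InvN :: "nat \<Rightarrow> real \<Rightarrow> real \<Rightarrow> (nat \<Rightarrow> real) \<Rightarrow> nat \<Rightarrow> real" where
  "InvN K p q \<phi> = (\<lambda>i. max 0 (Inv K p q \<phi> i) / (\<Sum>j<K. max 0 (Inv K p q \<phi> j)))"

definition InvP :: "nat \<Rightarrow> real \<Rightarrow> real \<Rightarrow> (nat \<Rightarrow> real) \<Rightarrow> nat \<Rightarrow> real" where
  "InvP K p q \<phi> = (SOME t. t \<in> prob_simplex K \<and>
      (\<forall>t' \<in> prob_simplex K. sqdist K t (Inv K p q \<phi>) \<le> sqdist K t' (Inv K p q \<phi>)))"

definition mcount :: "nat \<Rightarrow> (nat \<Rightarrow> real) \<Rightarrow> real \<Rightarrow> nat" where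
  "mcount K \<phi> \<tau> = card {i. i < K \<and> \<phi> i < \<tau>}"

definition cfac :: "nat \<Rightarrow> real \<Rightarrow> (nat \<Rightarrow> real) \<Rightarrow> real \<Rightarrow> real" where
  "cfac K q \<phi> \<tau> = (1 - real (mcount K \<phi> \<tau>) * q) / (\<Sum>i\<in>{i. i < K \<and> \<phi> i \<ge> \<tau>}. \<phi> i)"

definition tau_star :: "nat \<Rightarrow> real \<Rightarrow> (nat \<Rightarrow> real) \<Rightarrow> real" where
  "tau_star K q \<phi> = Min {\<tau> \<in> \<phi> ` {..<K}. \<forall>i<K. \<phi> i \<ge> \<tau> \<longrightarrow> cfac K q \<phi> \<tau> * \<phi> i \<ge> q}"

definition MLEstar :: "nat \<Rightarrow> real \<Rightarrow> real \<Rightarrow> (nat \<Rightarrow> real) \<Rightarrow> nat \<Rightarrow> real" where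
  "MLEstar K p q \<phi> = (\<lambda>i. if \<phi> i < tau_star K q \<phi> then 0
      else (cfac K q \<phi> (tau_star K q \<phi>) * \<phi> i - q) / (p - q))"

end

theory Submission
  imports Defs
begin

lemma cat_pmf_pmf:
  assumes "\<theta> \<in> prob_simplex K"
  shows "pmf (cat_pmf K \<theta>) x = (if x < K then \<theta> x else 0)"
proof -
  have nn: "\<And>x. 0 \<le> (if x < K then \<theta> x else 0)" using assms by (auto simp: prob_simplex_def)
  have "(\<integral>\<^sup>+x. ennreal (if x < K then \<theta> x else 0) \<partial>count_space UNIV) = (\<Sum>x\<in>{..<K}. ennreal (if x < K then \<theta> x else 0))"
    by (rule nn_integral_count_space') auto
  also have "\<dots> = (\<Sum>x\<in>{..<K}. ennreal (\<theta> x))" by simp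
  also have "\<dots> = ennreal (\<Sum>x<K. \<theta> x)" using assms by (subst sum_ennreal) (auto simp: prob_simplex_def)
  also have "\<dots> = 1" using assms by (simp add: prob_simplex_def)
  finally show ?thesis unfolding cat_pmf_def using nn by (subst pmf_embed_pmf) auto
qed

lemma sum_rr:
  assumes "x < K"
  shows "(\<Sum>y<K. (if y = x then p else q)) = p + (real K - 1) * (q::real)"
proof -
  have "(\<Sum>y<K. (if y = x then p else q)) = (if x = x then p else q) + (\<Sum>y\<in>{..<K}-{x}. (if y = x then p else q))"
    using assms by (subst sum.remove[of _ x]) auto
  also have "(\<Sum>y\<in>{..<K}-{x}. (if y = x then p else q)) = (\<Sum>y\<in>{..<K}-{x}. q)" by (rule sum.cong) auto
  also have "\<dots> = real (K - 1) * q" using assms by simp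
  finally show ?thesis using assms by (simp add: of_nat_diff)
qed

lemma rr_pmf_pmf:
  assumes "x < K" "0 \<le> q" "q \<le> p" "p + (real K - 1) * q = 1"
  shows "pmf (rr_pmf K p q x) y = (if y < K then (if y = x then p else q) else 0)"
proof -
  have nn: "\<And>y. 0 \<le> (if y < K then (if y = x then p else q) else 0)" using assms by auto
  have "(\<integral>\<^sup>+y. ennreal (if y < K then (if y = x then p else q) else 0) \<partial>count_space UNIV)
      = (\<Sum>y\<in>{..<K}. ennreal (if y < K then (if y = x then p else q) else 0))"
    by (rule nn_integral_count_space') auto
  also have "\<dots> = (\<Sum>y\<in>{..<K}. ennreal (if y = x then p else q))" by simp
  also have "\<dots> = ennreal (\<Sum>y<K. (if y = x then p else q))" using assms by (subst sum_ennreal) auto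
  also have "\<dots> = 1" using assms sum_rr[OF assms(1), of p q] by simp
  finally show ?thesis unfolding rr_pmf_def using nn by (subst pmf_embed_pmf) auto
qed

lemma set_cat_pmf:
  assumes "\<theta> \<in> prob_simplex K"
  shows "set_pmf (cat_pmf K \<theta>) \<subseteq> {..<K}"
  using cat_pmf_pmf[OF assms] by (auto simp: set_pmf_eq)

lemma out_pmf_pmf:
  assumes "\<theta> \<in> prob_simplex K" "0 \<le> q" "q \<le> p" "p + (real K - 1) * q = 1"
  shows "pmf (out_pmf K p q \<theta>) y = (if y < K then q + (p - q) * \<theta> y else 0)"
proof -
  have "pmf (out_pmf K p q \<theta>) y = (\<integral>x. pmf (rr_pmf K p q x) y \<partial>measure_pmf (cat_pmf K \<theta>))"
    unfolding out_pmf_def by (rule pmf_bind)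
  also have "\<dots> = (\<Sum>x\<in>{..<K}. pmf (cat_pmf K \<theta>) x *\<^sub>R pmf (rr_pmf K p q x) y)"
    using set_cat_pmf[OF assms(1)] by (intro integral_measure_pmf) auto
  also have "\<dots> = (\<Sum>x\<in>{..<K}. \<theta> x * (if y < K then (if y = x then p else q) else 0))"
    using assms by (intro sum.cong) (auto simp: cat_pmf_pmf rr_pmf_pmf)
  also have "\<dots> = (if y < K then q + (p - q) * \<theta> y else 0)"
  proof (cases "y < K")
    case True
    have "(\<Sum>x\<in>{..<K}. \<theta> x * (if y = x then p else q)) = (\<Sum>x\<in>{..<K}. q * \<theta> x + (if x = y then (p - q) * \<theta> x else 0))"
      by (intro sum.cong) (auto simp: algebra_simps)
    also have "\<dots> = q * (\<Sum>x<K. \<theta> x) + (p - q) * \<theta> y"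
      using True by (simp add: sum.distrib sum_distrib_left)
    finally show ?thesis using True assms(1) by (simp add: prob_simplex_def)
  qed simp
  finally show ?thesis .
qed

lemma set_out_pmf:
  assumes "\<theta> \<in> prob_simplex K" "0 \<le> q" "q \<le> p" "p + (real K - 1) * q = 1"
  shows "set_pmf (out_pmf K p q \<theta>) \<subseteq> {..<K}"
  using out_pmf_pmf[OF assms] by (auto simp: set_pmf_eq)

lemma set_iid_pmf:
  "set_pmf (iid_pmf n D) \<subseteq> {xs. length xs = n \<and> set xs \<subseteq> set_pmf D}"
  by (induction n) (simp, fastforce)

lemma finite_iid_pmf:
  assumes "finite (set_pmf D)"
  shows "finite (set_pmf (iid_pmf n D))"
  by (rule finite_subset[OF set_iid_pmf]) (use finite_lists_length_eq[OF assms, of n] in \<open>simp add: conj_commute\<close>)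

lemma exp_bind_fin:
  fixes h :: "'b \<Rightarrow> real"
  assumes "finite (set_pmf p)" "\<And>x. x \<in> set_pmf p \<Longrightarrow> finite (set_pmf (f x))"
  shows "measure_pmf.expectation (p \<bind> f) h = measure_pmf.expectation p (\<lambda>a. measure_pmf.expectation (f a) h)"
  using assms
  by (subst pmf_expectation_bind[of "set_pmf p"], simp_all, subst integral_measure_pmf[of "set_pmf p"], auto)

definition cnt :: "nat \<Rightarrow> nat list \<Rightarrow> real" where
  "cnt y xs = real (length (filter (\<lambda>z. z = y) xs))"

lemma cnt_Cons: "cnt y (x # xs) = cnt y xs + (if x = y then 1 else 0)"
  by (simp add: cnt_def)

lemma exp_iid_Suc:
  fixes g :: "nat list \<Rightarrow> real"
  assumes "finite (set_pmf D)"
  shows "measure_pmf.expectation (iid_pmf (Suc n) D) g =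
         measure_pmf.expectation D (\<lambda>x. measure_pmf.expectation (iid_pmf n D) (\<lambda>xs. g (x # xs)))"
proof -
  have "iid_pmf (Suc n) D = D \<bind> (\<lambda>x. map_pmf (\<lambda>xs. x # xs) (iid_pmf n D))"
    by (simp add: map_pmf_def)
  also have "measure_pmf.expectation \<dots> g = measure_pmf.expectation D (\<lambda>x. measure_pmf.expectation (map_pmf (\<lambda>xs. x # xs) (iid_pmf n D)) g)"
    using assms finite_iid_pmf[OF assms, of n] by (intro exp_bind_fin) auto
  finally show ?thesis by simp
qed

lemma exp_ind:
  "measure_pmf.expectation D (\<lambda>x. if x = y then 1 else 0 :: real) = pmf D y"
  by (subst integral_measure_pmf[of "{y}"]) (auto split: if_splits)

lemma iid_moments:
  fixes D :: "nat pmf" and y :: nat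
  assumes fin: "finite (set_pmf D)"
  defines "m \<equiv> pmf D y"
  shows "measure_pmf.expectation (iid_pmf n D) (\<lambda>xs. cnt y xs - n * m) = 0 \<and>
         measure_pmf.expectation (iid_pmf n D) (\<lambda>xs. (cnt y xs - n * m)^2) = n * m * (1 - m)"
proof (induction n)
  case 0
  then show ?case by (simp add: cnt_def)
next
  case (Suc n)
  have intD: "integrable (measure_pmf D) f" for f :: "nat \<Rightarrow> real"
    by (rule integrable_measure_pmf_finite[OF fin])
  have intI: "integrable (measure_pmf (iid_pmf n D)) f" for f :: "nat list \<Rightarrow> real"
    by (rule integrable_measure_pmf_finite[OF finite_iid_pmf[OF fin]])
  define b where "b x = (if x = y then 1 else 0) - m" for x :: nat
  have eq: "cnt y (x # xs) - real (Suc n) * m = (cnt y xs - n * m) + b x" for x xs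
    by (simp add: cnt_Cons b_def algebra_simps)
  have Eb: "measure_pmf.expectation D b = 0"
    unfolding b_def using intD by (simp add: exp_ind m_def)
  have Eb2: "measure_pmf.expectation D (\<lambda>x. (b x)^2) = m * (1 - m)"
  proof -
    have "(\<lambda>x. (b x)^2) = (\<lambda>x. (1 - 2 * m) * (if x = y then 1 else 0) + m^2)"
      by (auto simp: b_def fun_eq_iff power2_eq_square algebra_simps)
    then show ?thesis using intD by (simp add: exp_ind m_def power2_eq_square algebra_simps)
  qed
  have A: "measure_pmf.expectation (iid_pmf n D) (\<lambda>xs. cnt y xs - n * m + c) = c" for c
    using Suc.IH intI by simp
  have B: "measure_pmf.expectation (iid_pmf n D) (\<lambda>xs. (cnt y xs - n * m + c)^2) = n * m * (1 - m) + c^2" for c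
  proof -
    have "(\<lambda>xs. (cnt y xs - n * m + c)^2) = (\<lambda>xs. (cnt y xs - n * m)^2 + 2 * c * (cnt y xs - n * m) + c^2)"
      by (auto simp: fun_eq_iff power2_eq_square algebra_simps)
    then show ?thesis using Suc.IH intI by simp
  qed
  show ?case
  proof
    show "measure_pmf.expectation (iid_pmf (Suc n) D) (\<lambda>xs. cnt y xs - real (Suc n) * m) = 0"
      using Eb by (subst exp_iid_Suc[OF fin]) (simp only: eq A)
    show "measure_pmf.expectation (iid_pmf (Suc n) D) (\<lambda>xs. (cnt y xs - real (Suc n) * m)^2) = real (Suc n) * m * (1 - m)"
      using Eb2 intD by (subst exp_iid_Suc[OF fin]) (simp only: eq B, simp add: algebra_simps)
  qed
qed

definition mu :: "real \<Rightarrow> real \<Rightarrow> (nat \<Rightarrow> real) \<Rightarrow> nat \<Rightarrow> real" where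
  "mu p q \<theta> = (\<lambda>i. q + (p - q) * \<theta> i)"

lemma sum_cnt: "set xs \<subseteq> {..<K} \<Longrightarrow> (\<Sum>i<K. cnt i xs) = real (length xs)"
proof (induction xs)
  case Nil
  then show ?case by (simp add: cnt_def)
next
  case (Cons x xs)
  have "(\<Sum>i<K. cnt i (x # xs)) = (\<Sum>i<K. cnt i xs) + (\<Sum>i<K. (if x = i then 1 else 0))"
    by (simp add: cnt_Cons sum.distrib)
  also have "(\<Sum>i<K. (if x = i then 1 else 0 :: real)) = 1" using Cons.prems by simp
  finally show ?case using Cons by simp
qed

lemma hist_cnt: "hist xs i = cnt i xs / real (length xs)"
  by (simp add: hist_def cnt_def)

locale rrsetup =
  fixes K :: nat and p q :: real and \<theta> :: "nat \<Rightarrow> real"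
  assumes K2: "K \<ge> 2" and q0: "0 < q" and qp: "q < p" and pq1: "p + (real K - 1) * q = 1"
    and th: "\<theta> \<in> prob_simplex K"
begin

abbreviation "D \<equiv> out_pmf K p q \<theta>"
abbreviation "m \<equiv> mu p q \<theta>"

lemma pmfD: "pmf D y = (if y < K then m y else 0)"
  using out_pmf_pmf[OF th] q0 qp pq1 by (simp add: mu_def)

lemma setD: "set_pmf D \<subseteq> {..<K}"
  using set_out_pmf[OF th] q0 qp pq1 by simp

lemma finD: "finite (set_pmf D)"
  using setD finite_subset by blast

lemma fin_phi: "finite (set_pmf (phi_pmf K p q \<theta> N))"
  unfolding phi_pmf_def using finite_iid_pmf[OF finD] by simp

lemma int_phi: "integrable (measure_pmf (phi_pmf K p q \<theta> N)) (f :: _ \<Rightarrow> real)"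
  by (rule integrable_measure_pmf_finite[OF fin_phi])

lemma supp_phi:
  assumes "\<phi> \<in> set_pmf (phi_pmf K p q \<theta> N)" "N \<ge> 1"
  shows "(\<Sum>i<K. \<phi> i) = 1" "\<And>i. 0 \<le> \<phi> i"
proof -
  obtain xs where xs: "xs \<in> set_pmf (iid_pmf N D)" "\<phi> = hist xs"
    using assms(1) unfolding phi_pmf_def by auto
  have l: "length xs = N" "set xs \<subseteq> {..<K}" using set_iid_pmf xs(1) setD by blast+
  have "(\<Sum>i<K. \<phi> i) = (\<Sum>i<K. cnt i xs) / real N"
    using l by (simp add: xs(2) hist_cnt sum_divide_distrib)
  then show "(\<Sum>i<K. \<phi> i) = 1" using sum_cnt[OF l(2)] l assms(2) by simp
  show "\<And>i. 0 \<le> \<phi> i" by (simp add: xs(2) hist_def)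
qed

lemma phi_sq:
  assumes "N \<ge> 1" "i < K"
  shows "measure_pmf.expectation (phi_pmf K p q \<theta> N) (\<lambda>\<phi>. (\<phi> i - m i)^2) = m i * (1 - m i) / N"
proof -
  have "measure_pmf.expectation (phi_pmf K p q \<theta> N) (\<lambda>\<phi>. (\<phi> i - m i)^2)
      = measure_pmf.expectation (iid_pmf N D) (\<lambda>xs. (hist xs i - m i)^2)"
    unfolding phi_pmf_def by simp
  also have "\<dots> = measure_pmf.expectation (iid_pmf N D) (\<lambda>xs. (cnt i xs - N * m i)^2 / (real N)^2)"
  proof (rule integral_cong_AE)
    show "AE x in measure_pmf (iid_pmf N D). (hist x i - m i)\<^sup>2 = (cnt i x - real N * m i)\<^sup>2 / (real N)\<^sup>2"
    proof (rule AE_pmfI)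
      fix xs assume "xs \<in> set_pmf (iid_pmf N D)"
      then have "length xs = N" using set_iid_pmf by blast
      then show "(hist xs i - m i)\<^sup>2 = (cnt i xs - real N * m i)\<^sup>2 / (real N)\<^sup>2"
        using assms(1) by (simp add: hist_cnt power_divide[symmetric] diff_divide_distrib)
    qed
  qed simp_all
  also have "\<dots> = measure_pmf.expectation (iid_pmf N D) (\<lambda>xs. (cnt i xs - N * m i)^2) / (real N)^2"
    by simp
  also have "\<dots> = N * m i * (1 - m i) / (real N)^2"
    using iid_moments[OF finD, of N i] assms(2) by (simp add: pmfD)
  also have "\<dots> = m i * (1 - m i) / N" using assms(1) by (simp add: power2_eq_square)
  finally show ?thesis .
qed

lemma E_sqdist:
  assumes "N \<ge> 1"
  shows "measure_pmf.expectation (phi_pmf K p q \<theta> N) (\<lambda>\<phi>. sqdist K \<phi> m) \<le> K / (4 * real N)"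
proof -
  have "measure_pmf.expectation (phi_pmf K p q \<theta> N) (\<lambda>\<phi>. sqdist K \<phi> m)
      = (\<Sum>i<K. measure_pmf.expectation (phi_pmf K p q \<theta> N) (\<lambda>\<phi>. (\<phi> i - m i)^2))"
    unfolding sqdist_def by (subst Bochner_Integration.integral_sum) (auto simp: int_phi)
  also have "\<dots> = (\<Sum>i<K. m i * (1 - m i) / N)"
    using assms by (intro sum.cong) (auto simp: phi_sq)
  also have "\<dots> \<le> (\<Sum>i<K. 1 / (4 * real N))"
  proof (rule sum_mono)
    fix i
    have "m i * (1 - m i) = 1/4 - (m i - 1/2)^2" by (simp add: power2_eq_square algebra_simps)
    then have "m i * (1 - m i) \<le> 1/4" by (simp add: zero_le_power2)
    then have "m i * (1 - m i) / N \<le> (1/4) / N" by (rule divide_right_mono) simp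
    then show "m i * (1 - m i) / N \<le> 1 / (4 * real N)" by simp
  qed
  also have "\<dots> = K / (4 * real N)" by simp
  finally show ?thesis .
qed

lemma tail:
  assumes "N \<ge> 1" "c > 0"
  shows "measure_pmf.prob (phi_pmf K p q \<theta> N) {\<phi>. sqdist K \<phi> m \<ge> c} \<le> K / (4 * real N * c)"
proof -
  have "measure_pmf.prob (phi_pmf K p q \<theta> N) {\<phi> \<in> space (measure_pmf (phi_pmf K p q \<theta> N)). sqdist K \<phi> m \<ge> c}
     \<le> measure_pmf.expectation (phi_pmf K p q \<theta> N) (\<lambda>\<phi>. sqdist K \<phi> m) / c"
    by (rule integral_Markov_inequality_measure) (auto simp: int_phi sqdist_def assms intro!: sum_nonneg)
  also have "\<dots> \<le> (K / (4 * real N)) / c" by (rule divide_right_mono) (use E_sqdist[OF assms(1)] assms(2) in auto)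
  finally show ?thesis by simp
qed

lemma consistency_generic:
  assumes "\<delta> > 0"
    and good: "\<And>\<phi>. (\<Sum>i<K. \<phi> i) = 1 \<Longrightarrow> (\<forall>i. 0 \<le> \<phi> i) \<Longrightarrow> sqdist K \<phi> m < \<delta> \<Longrightarrow> \<not> B \<phi>"
  shows "(\<lambda>N. measure_pmf.prob (phi_pmf K p q \<theta> N) {\<phi>. B \<phi>}) \<longlonglongrightarrow> 0"
proof (rule tendsto_sandwich[where f = "\<lambda>_. 0" and h = "\<lambda>N. (K / (4 * \<delta>)) * inverse (real N)"])
  show "\<forall>\<^sub>F N in sequentially. 0 \<le> measure_pmf.prob (phi_pmf K p q \<theta> N) {\<phi>. B \<phi>}" by simp
  show "\<forall>\<^sub>F N in sequentially. measure_pmf.prob (phi_pmf K p q \<theta> N) {\<phi>. B \<phi>} \<le> (K / (4 * \<delta>)) * inverse (real N)"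
    using eventually_ge_at_top[of 1]
  proof eventually_elim
    case (elim N)
    have "measure_pmf.prob (phi_pmf K p q \<theta> N) {\<phi>. B \<phi>}
        = measure_pmf.prob (phi_pmf K p q \<theta> N) ({\<phi>. B \<phi>} \<inter> set_pmf (phi_pmf K p q \<theta> N))"
      by (simp add: measure_Int_set_pmf)
    also have "\<dots> \<le> measure_pmf.prob (phi_pmf K p q \<theta> N) {\<phi>. sqdist K \<phi> m \<ge> \<delta>}"
    proof (rule measure_pmf.finite_measure_mono)
      show "{\<phi>. B \<phi>} \<inter> set_pmf (phi_pmf K p q \<theta> N) \<subseteq> {\<phi>. \<delta> \<le> sqdist K \<phi> m}"
      proof
        fix \<phi> assume a: "\<phi> \<in> {\<phi>. B \<phi>} \<inter> set_pmf (phi_pmf K p q \<theta> N)"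
        have "(\<Sum>i<K. \<phi> i) = 1" "\<forall>i. 0 \<le> \<phi> i" using supp_phi[of \<phi> N] a elim by auto
        then show "\<phi> \<in> {\<phi>. \<delta> \<le> sqdist K \<phi> m}" using good[of \<phi>] a by force
      qed
    qed simp
    also have "\<dots> \<le> K / (4 * real N * \<delta>)" by (rule tail) (use elim assms in auto)
    also have "real K / (4 * real N * \<delta>) = (real K / (4 * \<delta>)) * inverse (real N)"
      by (simp add: inverse_eq_divide)
    finally show ?case .
  qed
  show "(\<lambda>N. (K / (4 * \<delta>)) * inverse (real N)) \<longlonglongrightarrow> 0"
    by (rule tendsto_mult_right_zero[OF lim_inverse_n])
qed simp

end

lemma proj_exists:
  fixes v :: "nat \<Rightarrow> real"
  assumes K1: "K \<ge> 1"
  shows "\<exists>t. t \<in> prob_simplex K \<and> (\<forall>t' \<in> prob_simplex K. sqdist K t v \<le> sqdist K t' v)"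
proof -
  define g where "g l = (\<Sum>i<K. max (v i - l) 0)" for l :: real
  define R where "R = (\<Sum>i<K. \<bar>v i\<bar>)"
  have vR: "\<bar>v i\<bar> \<le> R" if "i < K" for i
    unfolding R_def using that by (intro member_le_sum) auto
  have R0: "0 \<le> R" unfolding R_def by (intro sum_nonneg) auto
  have cont: "continuous_on {-R-1..R} g"
    unfolding g_def by (intro continuous_intros)
  have gb: "g R \<le> 1"
  proof -
    have "g R = (\<Sum>i<K. 0)" unfolding g_def
      by (intro sum.cong) (use vR in \<open>force+\<close>)
    then show ?thesis by simp
  qed
  have ga: "1 \<le> g (-R-1)"
  proof -
    have "(\<Sum>i<K. (1::real)) \<le> g (-R-1)" unfolding g_def
      by (intro sum_mono) (use vR in \<open>force\<close>)
    then show ?thesis using K1 by simp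
  qed
  obtain l where l: "g l = 1"
    using IVT2'[where f=g and a="-R-1" and b=R and y=1, OF gb ga _ cont] R0 by auto
  define t where "t i = max (v i - l) 0" for i
  have tS: "t \<in> prob_simplex K"
    using l unfolding prob_simplex_def t_def g_def by auto
  have "sqdist K t v \<le> sqdist K t' v" if t': "t' \<in> prob_simplex K" for t'
  proof -
    have pt: "(t' i - v i)^2 - (t i - v i)^2 \<ge> -2 * l * (t' i - t i)" if "i < K" for i
    proof -
      have nn: "0 \<le> t' i" using t' that by (auto simp: prob_simplex_def)
      have id: "(t' i - v i)^2 - (t i - v i)^2 = (t' i - t i)^2 + 2 * (t i - v i) * (t' i - t i)"
        by (simp add: power2_eq_square algebra_simps)
      have "(t i - v i) * (t' i - t i) \<ge> - l * (t' i - t i)"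
      proof (cases "v i - l \<ge> 0")
        case True
        then show ?thesis by (simp add: t_def)
      next
        case False
        then have "t i = 0" by (simp add: t_def)
        then show ?thesis using False nn by (simp add: mult_right_mono)
      qed
      then show ?thesis using id zero_le_power2[of "t' i - t i"] by linarith
    qed
    have "(\<Sum>i<K. (t' i - v i)^2 - (t i - v i)^2) \<ge> (\<Sum>i<K. -2 * l * (t' i - t i))"
      by (intro sum_mono) (use pt in auto)
    also have "(\<Sum>i<K. -2 * l * (t' i - t i)) = -2 * l * ((\<Sum>i<K. t' i) - (\<Sum>i<K. t i))"
      by (simp add: sum_distrib_left[symmetric] sum_subtractf sum_negf)
    also have "\<dots> = 0" using t' tS by (simp add: prob_simplex_def)
    finally show ?thesis unfolding sqdist_def by (simp add: sum_subtractf)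
  qed
  then show ?thesis using tS by blast
qed

lemma sqdist_sym: "sqdist K a b = sqdist K b a"
  unfolding sqdist_def by (simp add: power2_commute)

lemma sqdist_tri: "sqdist K a c \<le> 2 * sqdist K a b + 2 * sqdist K b c"
proof -
  have "(a i - c i)^2 \<le> 2 * (a i - b i)^2 + 2 * (b i - c i)^2" for i
  proof -
    have "2 * (a i - b i)^2 + 2 * (b i - c i)^2 - (a i - c i)^2 = ((a i - b i) - (b i - c i))^2"
      by (simp add: power2_eq_square algebra_simps)
    then show ?thesis using zero_le_power2[of "(a i - b i) - (b i - c i)"] by linarith
  qed
  then have "sqdist K a c \<le> (\<Sum>i<K. 2 * (a i - b i)^2 + 2 * (b i - c i)^2)"
    unfolding sqdist_def by (intro sum_mono)
  also have "\<dots> = 2 * sqdist K a b + 2 * sqdist K b c"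
    unfolding sqdist_def by (simp add: sum.distrib sum_distrib_left)
  finally show ?thesis .
qed

lemma InvP_bound:
  assumes "K \<ge> 1" "\<theta> \<in> prob_simplex K"
  shows "sqdist K (InvP K p q \<phi>) \<theta> \<le> 4 * sqdist K (Inv K p q \<phi>) \<theta>"
proof -
  let ?v = "Inv K p q \<phi>"
  let ?P = "\<lambda>t. t \<in> prob_simplex K \<and> (\<forall>t' \<in> prob_simplex K. sqdist K t ?v \<le> sqdist K t' ?v)"
  have ex: "\<exists>t. ?P t" by (rule proj_exists[OF assms(1)])
  have "?P (SOME t. ?P t)" using ex by (rule someI_ex)
  then have "?P (InvP K p q \<phi>)" unfolding InvP_def .
  then have "sqdist K (InvP K p q \<phi>) ?v \<le> sqdist K \<theta> ?v" using assms(2) by blast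
  then show ?thesis using sqdist_tri[of K "InvP K p q \<phi>" \<theta> ?v] sqdist_sym[of K \<theta> ?v] by linarith
qed

context rrsetup begin

lemma Inv_sq: "sqdist K (Inv K p q \<phi>) \<theta> = sqdist K \<phi> m / (p - q)^2"
proof -
  have "(Inv K p q \<phi> i - \<theta> i)^2 = (\<phi> i - m i)^2 / (p - q)^2" for i
  proof -
    have "Inv K p q \<phi> i - \<theta> i = (\<phi> i - m i) / (p - q)"
      using qp by (simp add: Inv_def mu_def field_simps)
    then show ?thesis by (simp add: power_divide)
  qed
  then show ?thesis unfolding sqdist_def by (simp add: sum_divide_distrib)
qed


lemma th_bounds: "i < K \<Longrightarrow> 0 \<le> \<theta> i \<and> \<theta> i \<le> 1"
proof -
  assume i: "i < K"
  have nn: "\<forall>i<K. 0 \<le> \<theta> i" and s1: "(\<Sum>i<K. \<theta> i) = 1" using th by (auto simp: prob_simplex_def)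
  have "\<theta> i \<le> (\<Sum>i<K. \<theta> i)" using i nn by (intro member_le_sum) auto
  then show ?thesis using s1 nn i by auto
qed

lemma m_bounds: "i < K \<Longrightarrow> q \<le> m i \<and> m i \<le> p"
  using th_bounds[of i] qp unfolding mu_def
  by (auto simp: mult_right_le_one_le) (smt (verit) mult_left_le)

lemma coord_small:
  assumes "sqdist K \<phi> m < \<delta>^2" "\<delta> > 0" "i < K"
  shows "\<bar>\<phi> i - m i\<bar> < \<delta>"
proof -
  have "(\<phi> i - m i)^2 \<le> sqdist K \<phi> m" unfolding sqdist_def using assms(3)
    by (intro member_le_sum) auto
  then have "\<bar>\<phi> i - m i\<bar>^2 < \<delta>^2" using assms(1) by simp
  then show ?thesis using power2_less_imp_less[OF _ less_imp_le[OF assms(2)]] by blast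
qed

lemma sqdist_coord:
  fixes \<eta> :: real
  assumes "\<forall>i<K. \<bar>a i - b i\<bar> \<le> \<eta>"
  shows "sqdist K a b \<le> K * \<eta>^2"
proof -
  have "sqdist K a b \<le> (\<Sum>i<K. \<eta>^2)" unfolding sqdist_def
  proof (rule sum_mono)
    fix i assume "i \<in> {..<K}"
    then have "\<bar>a i - b i\<bar>^2 \<le> \<eta>^2" using assms by (intro power_mono) auto
    then show "(a i - b i)^2 \<le> \<eta>^2" by simp
  qed
  then show ?thesis by simp
qed

lemma Inv_diff: "Inv K p q \<phi> i - \<theta> i = (\<phi> i - m i) / (p - q)"
  using qp by (simp add: Inv_def mu_def field_simps)

lemma InvN_coord:
  assumes "\<eta> > 0"
  shows "\<exists>\<delta>>0. \<forall>\<phi>. (\<forall>i<K. \<bar>\<phi> i - m i\<bar> < \<delta>) \<longrightarrow> (\<forall>i<K. \<bar>InvN K p q \<phi> i - \<theta> i\<bar> \<le> \<eta>)"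
proof -
  define d where "d = min (1 / (2 * K)) (\<eta> / (2 * (K + 1)))"
  have K0: "real K > 0" using K2 by simp
  have d0: "d > 0" unfolding d_def using assms K0 by auto
  have dK: "K * d \<le> 1/2"
  proof -
    have "K * d \<le> K * (1 / (2 * K))" unfolding d_def using K0 by (intro mult_left_mono) auto
    then show ?thesis using K0 by simp
  qed
  have dE: "2 * (K + 1) * d \<le> \<eta>"
  proof -
    have "2 * (K + 1) * d \<le> 2 * (K + 1) * (\<eta> / (2 * (K + 1)))" unfolding d_def by (intro mult_left_mono) auto
    then show ?thesis by simp
  qed
  show ?thesis
  proof (intro exI[of _ "d * (p - q)"] conjI allI impI)
    show "d * (p - q) > 0" using d0 qp by simp
    fix \<phi> assume a: "\<forall>i<K. \<bar>\<phi> i - m i\<bar> < d * (p - q)"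
    define a where "a i = max 0 (Inv K p q \<phi> i)" for i
    define S where "S = (\<Sum>j<K. a j)"
    have ad: "\<bar>a i - \<theta> i\<bar> \<le> d" if "i < K" for i
    proof -
      have "\<bar>Inv K p q \<phi> i - \<theta> i\<bar> = \<bar>\<phi> i - m i\<bar> / (p - q)" using qp by (simp add: Inv_diff)
      also have "\<dots> < d" using a that qp by (simp add: pos_divide_less_eq)
      finally have "\<bar>Inv K p q \<phi> i - \<theta> i\<bar> < d" .
      then show ?thesis using th_bounds[OF that] unfolding a_def by (auto simp: max_def)
    qed
    have S1: "\<bar>S - 1\<bar> \<le> K * d"
    proof -
      have "S - 1 = (\<Sum>j<K. a j - \<theta> j)" using th unfolding S_def prob_simplex_def by (simp add: sum_subtractf)
      then have "\<bar>S - 1\<bar> \<le> (\<Sum>j<K. \<bar>a j - \<theta> j\<bar>)" by (simp add: sum_abs)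
      also have "\<dots> \<le> (\<Sum>j<K. d)" by (intro sum_mono) (use ad in auto)
      finally show ?thesis by simp
    qed
    have Sh: "S \<ge> 1/2" using S1 dK by linarith
    fix i assume i: "i < K"
      have eq: "InvN K p q \<phi> i - \<theta> i = ((a i - \<theta> i) + \<theta> i * (1 - S)) / S"
        using Sh unfolding InvN_def a_def[symmetric] S_def[symmetric] by (simp add: field_simps)
      have num: "\<bar>(a i - \<theta> i) + \<theta> i * (1 - S)\<bar> \<le> d + K * d"
      proof -
        have "\<theta> i * \<bar>1 - S\<bar> \<le> 1 * (K * d)"
          using th_bounds[OF i] S1 by (intro mult_mono) (auto simp: abs_minus_commute)
        then have "\<bar>\<theta> i * (1 - S)\<bar> \<le> 1 * (K * d)"
          using th_bounds[OF i] by (simp add: abs_mult)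
        then show ?thesis using ad[OF i] by (smt (verit))
      qed
      have "\<bar>InvN K p q \<phi> i - \<theta> i\<bar> = \<bar>(a i - \<theta> i) + \<theta> i * (1 - S)\<bar> / S" using Sh by (simp add: eq)
      also have "\<dots> \<le> (d + K * d) / (1/2)"
        using num Sh by (intro frac_le) auto
      also have "\<dots> = 2 * (K + 1) * d" by (simp add: algebra_simps)
      finally show "\<bar>InvN K p q \<phi> i - \<theta> i\<bar> \<le> \<eta>" using dE by linarith
  qed
qed

end

context rrsetup begin

lemma p_le1: "p \<le> 1"
  using pq1 q0 K2 by (smt (verit) mult_nonneg_nonneg of_nat_1 of_nat_le_iff one_le_numeral order_trans)

lemma MLE_coord:
  assumes eta: "\<eta> > 0"
  shows "\<exists>\<delta>>0. \<forall>\<phi>. (\<Sum>i<K. \<phi> i) = 1 \<longrightarrow> (\<forall>i<K. \<bar>\<phi> i - m i\<bar> < \<delta>) \<longrightarrow>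
           (\<forall>i<K. \<bar>MLEstar K p q \<phi> i - \<theta> i\<bar> \<le> \<eta>)"
proof -
  define Z where "Z = {i. i < K \<and> \<theta> i = 0}"
  define P where "P = {i. i < K \<and> \<theta> i > 0}"
  have finP: "finite P" and finZ: "finite Z" unfolding P_def Z_def by auto
  have ZP: "j < K \<Longrightarrow> j \<in> Z \<or> j \<in> P" for j
    using th_bounds[of j] unfolding Z_def P_def by auto
  have Pne: "P \<noteq> {}"
  proof
    assume "P = {}"
    then have "\<forall>j<K. \<theta> j = 0" using ZP unfolding Z_def by auto
    then have "(\<Sum>j<K. \<theta> j) = 0" by simp
    then show False using th by (simp add: prob_simplex_def)
  qed
  obtain j0 where j0: "j0 \<in> P" using Pne by blast
  define tm where "tm = Min (\<theta> ` P)"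
  have tmin: "tm \<in> \<theta> ` P" unfolding tm_def using finP Pne by (intro Min_in) auto
  have tm0: "tm > 0" using tmin unfolding P_def by auto
  have tmle: "j \<in> P \<Longrightarrow> tm \<le> \<theta> j" for j unfolding tm_def using finP by (intro Min_le) auto
  define g where "g = (p - q) * tm"
  have g0: "g > 0" unfolding g_def using tm0 qp by simp
  have mP: "j \<in> P \<Longrightarrow> m j \<ge> q + g" for j
    unfolding g_def mu_def using tmle[of j] qp by (simp add: mult_left_mono)
  have mZ: "j \<in> Z \<Longrightarrow> m j = q" for j unfolding Z_def mu_def by simp
  have cardZ: "real (card Z) \<le> real K - 1"
  proof -
    have "Z \<subseteq> {..<K} - {j0}" using j0 unfolding Z_def P_def by auto
    then have "card Z \<le> card ({..<K} - {j0})" by (intro card_mono) auto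
    also have "\<dots> = K - 1" using j0 unfolding P_def by simp
    finally show ?thesis using K2 by linarith
  qed
  define B where "B = 1 + 4 * K / p"
  have B1: "B \<ge> 1" unfolding B_def using qp q0 by simp
  define \<delta> where "\<delta> = min (p / (2 * K)) (min g (\<eta> * (p - q)) / (2 * B))"
  have K0: "real K > 0" using K2 by simp
  have d0: "\<delta> > 0" unfolding \<delta>_def using K0 qp q0 g0 eta B1 by auto
  have dK: "K * \<delta> \<le> p / 2"
  proof -
    have "K * \<delta> \<le> K * (p / (2 * K))" unfolding \<delta>_def using K0 by (intro mult_left_mono) auto
    then show ?thesis using K0 by simp
  qed
  have dB: "\<delta> * B \<le> min g (\<eta> * (p - q)) / 2"
  proof -
    have "\<delta> * B \<le> (min g (\<eta> * (p - q)) / (2 * B)) * B" unfolding \<delta>_def using B1 by (intro mult_right_mono) auto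
    then show ?thesis using B1 by simp
  qed
  have dBeq: "\<delta> * B = \<delta> + 4 * K * \<delta> / p" unfolding B_def by (simp add: algebra_simps)
  have dle: "\<delta> \<le> \<delta> * B" using B1 d0 by simp
  have d1: "\<delta> \<le> 1"
  proof -
    have "K * \<delta> \<le> 1" using dK p_le1 by linarith
    moreover have "\<delta> \<le> K * \<delta>" using K2 d0 by (simp add: mult_le_cancel_right1)
    ultimately show ?thesis by linarith
  qed
  show ?thesis
  proof (intro exI[of _ \<delta>] conjI allI impI)
    show "\<delta> > 0" by (rule d0)
    fix \<phi> i
    assume s1: "(\<Sum>i<K. \<phi> i) = 1" and cl: "\<forall>i<K. \<bar>\<phi> i - m i\<bar> < \<delta>" and i: "i < K"
    have phib: "\<bar>\<phi> j\<bar> \<le> 2" if "j < K" for j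
      using cl that m_bounds[OF that] p_le1 d1 q0 by (smt (verit))
    have Zlt: "\<phi> j < \<phi> k" if "j \<in> Z" "k \<in> P" for j k
    proof -
      have "j < K" "k < K" using that unfolding Z_def P_def by auto
      then have "\<phi> j < m j + \<delta>" "\<phi> k > m k - \<delta>" using cl by (auto simp: abs_less_iff)
      moreover have "m j = q" "m k \<ge> q + g" using mZ mP that by auto
      moreover have "2 * \<delta> \<le> g" using dB dle by linarith
      ultimately show ?thesis by linarith
    qed
    define \<tau>0 where "\<tau>0 = Min (\<phi> ` P)"
    have t0in: "\<tau>0 \<in> \<phi> ` P" unfolding \<tau>0_def using finP Pne by (intro Min_in) auto
    have t0le: "k \<in> P \<Longrightarrow> \<tau>0 \<le> \<phi> k" for k unfolding \<tau>0_def using finP by (intro Min_le) auto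
    have E0: "{j. j < K \<and> \<phi> j < \<tau>0} = Z"
    proof
      show "{j. j < K \<and> \<phi> j < \<tau>0} \<subseteq> Z"
      proof
        fix j assume "j \<in> {j. j < K \<and> \<phi> j < \<tau>0}"
        then have "j < K" "\<phi> j < \<tau>0" by auto
        then show "j \<in> Z" using ZP[of j] t0le[of j] by fastforce
      qed
      show "Z \<subseteq> {j. j < K \<and> \<phi> j < \<tau>0}"
        using t0in Zlt unfolding Z_def by auto
    qed
    have cbound: "\<bar>cfac K q \<phi> \<tau> - 1\<bar> \<le> 2 * K * \<delta> / p" if EZ: "{j. j < K \<and> \<phi> j < \<tau>} \<subseteq> Z" for \<tau>
    proof -
      define E where "E = {j. j < K \<and> \<phi> j < \<tau>}"
      have finE: "finite E" unfolding E_def by auto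
      have EK: "E \<subseteq> {..<K}" unfolding E_def by auto
      have cE: "real (card E) \<le> real K - 1"
        using card_mono[OF finZ EZ] cardZ unfolding E_def by linarith
      have mc: "mcount K \<phi> \<tau> = card E" unfolding mcount_def E_def ..
      have seq: "{j. j < K \<and> \<phi> j \<ge> \<tau>} = {..<K} - E" unfolding E_def by auto
      have sden: "(\<Sum>j\<in>{j. j < K \<and> \<phi> j \<ge> \<tau>}. \<phi> j) = 1 - (\<Sum>j\<in>E. \<phi> j)"
        unfolding seq using s1 EK by (simp add: sum_diff)
      have num: "1 - real (card E) * q \<ge> p"
      proof -
        have "real (card E) * q \<le> (real K - 1) * q" using cE q0 by (intro mult_right_mono) auto
        then show ?thesis using pq1 by linarith
      qed
      have dev: "\<bar>(\<Sum>j\<in>E. \<phi> j) - real (card E) * q\<bar> \<le> K * \<delta>"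
      proof -
        have sm: "(\<Sum>j\<in>E. m j) = real (card E) * q"
        proof -
          have "(\<Sum>j\<in>E. m j) = (\<Sum>j\<in>E. q)" using EZ mZ unfolding E_def by (intro sum.cong) auto
          then show ?thesis by simp
        qed
        have "(\<Sum>j\<in>E. \<phi> j) - real (card E) * q = (\<Sum>j\<in>E. \<phi> j - m j)"
          by (simp add: sum_subtractf sm)
        then have "\<bar>(\<Sum>j\<in>E. \<phi> j) - real (card E) * q\<bar> \<le> (\<Sum>j\<in>E. \<bar>\<phi> j - m j\<bar>)"
          by (simp add: sum_abs)
        also have "\<dots> \<le> (\<Sum>j\<in>E. \<delta>)" using cl EK by (intro sum_mono) (auto intro: less_imp_le)
        also have "\<dots> = real (card E) * \<delta>" by simp
        also have "\<dots> \<le> K * \<delta>" using cE d0 by (intro mult_right_mono) auto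
        finally show ?thesis .
      qed
      define den where "den = 1 - (\<Sum>j\<in>E. \<phi> j)"
      have den2: "den \<ge> p / 2" using num dev dK unfolding den_def abs_le_iff by linarith
      have "cfac K q \<phi> \<tau> - 1 = ((\<Sum>j\<in>E. \<phi> j) - real (card E) * q) / den"
        unfolding cfac_def mc sden den_def[symmetric] using den2 qp q0
        by (simp add: field_simps den_def)
      then have "\<bar>cfac K q \<phi> \<tau> - 1\<bar> = \<bar>(\<Sum>j\<in>E. \<phi> j) - real (card E) * q\<bar> / den"
        using den2 qp q0 by simp
      also have "\<dots> \<le> (K * \<delta>) / (p / 2)" using dev den2 qp q0 by (intro frac_le) auto
      also have "\<dots> = 2 * K * \<delta> / p" by simp
      finally show ?thesis .
    qed
    define T where "T = {\<tau> \<in> \<phi> ` {..<K}. \<forall>i<K. \<phi> i \<ge> \<tau> \<longrightarrow> cfac K q \<phi> \<tau> * \<phi> i \<ge> q}"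
    have ts: "tau_star K q \<phi> = Min T" unfolding tau_star_def T_def ..
    have cdev: "\<bar>(cfac K q \<phi> \<tau> - 1) * \<phi> j\<bar> \<le> 4 * K * \<delta> / p"
      if "{j. j < K \<and> \<phi> j < \<tau>} \<subseteq> Z" "j < K" for \<tau> j
    proof -
      have "\<bar>cfac K q \<phi> \<tau> - 1\<bar> * \<bar>\<phi> j\<bar> \<le> (2 * K * \<delta> / p) * 2"
        using cbound[OF that(1)] phib[OF that(2)] by (intro mult_mono) auto
      then show ?thesis by (simp add: abs_mult)
    qed
    have t0T: "\<tau>0 \<in> T"
      unfolding T_def
    proof (intro CollectI conjI allI impI)
      show "\<tau>0 \<in> \<phi> ` {..<K}" using t0in unfolding P_def by auto
      fix j assume j: "j < K" "\<tau>0 \<le> \<phi> j"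
      have "j \<notin> Z" using E0 j by auto
      then have jP: "j \<in> P" using ZP j by auto
      have "\<phi> j > m j - \<delta>" using cl j by (auto simp: abs_less_iff)
      then have "\<phi> j - q \<ge> g - \<delta>" using mP[OF jP] by linarith
      moreover have "(cfac K q \<phi> \<tau>0 - 1) * \<phi> j \<ge> - (4 * K * \<delta> / p)"
        using cdev[of \<tau>0 j] E0 j by (simp add: abs_le_iff)
      moreover have "g - \<delta> - 4 * K * \<delta> / p \<ge> 0" using dB dBeq by (smt (verit) g0 min.cobounded1 field_sum_of_halves)
      ultimately have "cfac K q \<phi> \<tau>0 * \<phi> j - q \<ge> 0" by (simp add: algebra_simps)
      then show "q \<le> cfac K q \<phi> \<tau>0 * \<phi> j" by simp
    qed
    have finT: "finite T" unfolding T_def by auto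
    have tsT: "tau_star K q \<phi> \<in> T" unfolding ts using finT t0T by (intro Min_in) auto
    have tsle: "tau_star K q \<phi> \<le> \<tau>0" unfolding ts using finT t0T by (intro Min_le)
    have Es: "{j. j < K \<and> \<phi> j < tau_star K q \<phi>} \<subseteq> Z" using tsle E0 by auto
    show "\<bar>MLEstar K p q \<phi> i - \<theta> i\<bar> \<le> \<eta>"
    proof (cases "\<phi> i < tau_star K q \<phi>")
      case True
      then have "i \<in> Z" using Es i by auto
      then show ?thesis using True eta unfolding MLEstar_def Z_def by simp
    next
      case False
      let ?c = "cfac K q \<phi> (tau_star K q \<phi>)"
      have eq: "MLEstar K p q \<phi> i - \<theta> i = ((?c - 1) * \<phi> i + (\<phi> i - m i)) / (p - q)"
        using False qp unfolding MLEstar_def mu_def by (simp add: field_simps)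
      have "\<bar>(?c - 1) * \<phi> i + (\<phi> i - m i)\<bar> \<le> 4 * K * \<delta> / p + \<delta>"
        using cdev[OF Es i] cl i by (smt (verit))
      also have "\<dots> \<le> \<eta> * (p - q)" using dB dBeq eta qp by (smt (verit) min.cobounded2 field_sum_of_halves mult_pos_pos)
      finally have "\<bar>(?c - 1) * \<phi> i + (\<phi> i - m i)\<bar> / (p - q) \<le> \<eta>" using qp by (simp add: pos_divide_le_eq)
      then show ?thesis using qp by (simp add: eq)
    qed
  qed
qed

end

lemma quarter_le: "0 \<le> (a::real) \<Longrightarrow> a / 4 \<le> a" by simp

context rrsetup begin

lemma cons_from_coord:
  assumes coord: "\<And>\<eta>. \<eta> > 0 \<Longrightarrow> \<exists>\<delta>>0. \<forall>\<phi>. (\<Sum>i<K. \<phi> i) = 1 \<longrightarrow> (\<forall>i<K. \<bar>\<phi> i - m i\<bar> < \<delta>) \<longrightarrow>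
           (\<forall>i<K. \<bar>est \<phi> i - \<theta> i\<bar> \<le> \<eta>)"
    and eps: "\<epsilon> > 0"
  shows "(\<lambda>N. measure_pmf.prob (phi_pmf K p q \<theta> N) {\<phi>. sqrt (sqdist K (est \<phi>) \<theta>) > \<epsilon>}) \<longlonglongrightarrow> 0"
proof -
  have K0: "real K > 0" using K2 by simp
  define \<eta> where "\<eta> = \<epsilon> / K"
  have eta0: "\<eta> > 0" unfolding \<eta>_def using eps K0 by simp
  obtain \<delta> where d0: "\<delta> > 0" and dd: "\<forall>\<phi>. (\<Sum>i<K. \<phi> i) = 1 \<longrightarrow> (\<forall>i<K. \<bar>\<phi> i - m i\<bar> < \<delta>) \<longrightarrow>
           (\<forall>i<K. \<bar>est \<phi> i - \<theta> i\<bar> \<le> \<eta>)" using coord[OF eta0] by blast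
  show ?thesis
  proof (rule consistency_generic[of "\<delta>^2"])
    show "\<delta>^2 > 0" using d0 by simp
    fix \<phi> :: "nat \<Rightarrow> real"
    assume s1: "(\<Sum>i<K. \<phi> i) = 1" and "\<forall>i. 0 \<le> \<phi> i" and sq: "sqdist K \<phi> m < \<delta>^2"
    have "\<forall>i<K. \<bar>\<phi> i - m i\<bar> < \<delta>" using coord_small[OF sq d0] by blast
    then have "\<forall>i<K. \<bar>est \<phi> i - \<theta> i\<bar> \<le> \<eta>" using dd s1 by blast
    then have "sqdist K (est \<phi>) \<theta> \<le> K * \<eta>^2" by (rule sqdist_coord)
    also have "K * \<eta>^2 = \<epsilon>^2 / K" unfolding \<eta>_def using K0 by (simp add: power2_eq_square)
    also have "\<dots> \<le> \<epsilon>^2 / 1" using K2 by (intro divide_left_mono) auto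
    also have "\<dots> = \<epsilon>^2" by simp
    finally have "sqrt (sqdist K (est \<phi>) \<theta>) \<le> sqrt (\<epsilon>^2)" by (rule real_sqrt_le_mono)
    then show "\<not> sqrt (sqdist K (est \<phi>) \<theta>) > \<epsilon>" using eps by simp
  qed
qed

lemma cons_Inv: "\<epsilon> > 0 \<Longrightarrow> (\<lambda>N. measure_pmf.prob (phi_pmf K p q \<theta> N) {\<phi>. sqrt (sqdist K (Inv K p q \<phi>) \<theta>) > \<epsilon>}) \<longlonglongrightarrow> 0"
proof (rule cons_from_coord)
  fix \<eta> :: real assume eta: "\<eta> > 0"
  show "\<exists>\<delta>>0. \<forall>\<phi>. (\<Sum>i<K. \<phi> i) = 1 \<longrightarrow> (\<forall>i<K. \<bar>\<phi> i - m i\<bar> < \<delta>) \<longrightarrow> (\<forall>i<K. \<bar>Inv K p q \<phi> i - \<theta> i\<bar> \<le> \<eta>)"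
  proof (intro exI[of _ "\<eta> * (p - q)"] conjI allI impI)
    show "\<eta> * (p - q) > 0" using eta qp by simp
    fix \<phi> i assume "\<forall>i<K. \<bar>\<phi> i - m i\<bar> < \<eta> * (p - q)" "i < K"
    then have "\<bar>\<phi> i - m i\<bar> \<le> \<eta> * (p - q)" by auto
    then have "\<bar>\<phi> i - m i\<bar> / (p - q) \<le> \<eta>" using qp by (simp add: pos_divide_le_eq)
    then show "\<bar>Inv K p q \<phi> i - \<theta> i\<bar> \<le> \<eta>" using qp by (simp add: Inv_diff)
  qed
qed

lemma cons_InvN: "\<epsilon> > 0 \<Longrightarrow> (\<lambda>N. measure_pmf.prob (phi_pmf K p q \<theta> N) {\<phi>. sqrt (sqdist K (InvN K p q \<phi>) \<theta>) > \<epsilon>}) \<longlonglongrightarrow> 0"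
proof -
  have "\<exists>\<delta>>0. \<forall>\<phi>. (\<Sum>i<K. \<phi> i) = 1 \<longrightarrow> (\<forall>i<K. \<bar>\<phi> i - m i\<bar> < \<delta>) \<longrightarrow>
           (\<forall>i<K. \<bar>InvN K p q \<phi> i - \<theta> i\<bar> \<le> \<eta>)" if eta: "\<eta> > 0" for \<eta>
  proof -
    obtain \<delta> where "\<delta> > 0" "\<forall>\<phi>. (\<forall>i<K. \<bar>\<phi> i - m i\<bar> < \<delta>) \<longrightarrow> (\<forall>i<K. \<bar>InvN K p q \<phi> i - \<theta> i\<bar> \<le> \<eta>)"
      using InvN_coord[OF eta] by blast
    then show ?thesis by auto
  qed
  then show "\<epsilon> > 0 \<Longrightarrow> ?thesis" by (rule cons_from_coord[where est="InvN K p q"])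
qed

lemma cons_MLE: "\<epsilon> > 0 \<Longrightarrow> (\<lambda>N. measure_pmf.prob (phi_pmf K p q \<theta> N) {\<phi>. sqrt (sqdist K (MLEstar K p q \<phi>) \<theta>) > \<epsilon>}) \<longlonglongrightarrow> 0"
  by (rule cons_from_coord[where est="MLEstar K p q", OF MLE_coord])

lemma InvP_le: "sqdist K (InvP K p q \<phi>) \<theta> \<le> 4 * (sqdist K \<phi> m / (p - q)^2)"
proof -
  have K1: "1 \<le> K" using K2 by simp
  show ?thesis using InvP_bound[OF K1 th, of p q \<phi>] unfolding Inv_sq .
qed

lemma cons_InvP:
  assumes eps: "\<epsilon> > 0"
  shows "(\<lambda>N. measure_pmf.prob (phi_pmf K p q \<theta> N) {\<phi>. sqrt (sqdist K (InvP K p q \<phi>) \<theta>) > \<epsilon>}) \<longlonglongrightarrow> 0"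
proof (rule consistency_generic[of "\<epsilon>^2 * (p - q)^2 / 4"])
  show "\<epsilon>^2 * (p - q)^2 / 4 > 0" using eps qp by simp
  fix \<phi> :: "nat \<Rightarrow> real"
  assume sq: "sqdist K \<phi> m < \<epsilon>^2 * (p - q)^2 / 4"
  have "sqdist K (InvP K p q \<phi>) \<theta> \<le> 4 * (sqdist K \<phi> m / (p - q)^2)" by (rule InvP_le)
  also have "\<dots> < \<epsilon>^2"
  proof -
    have pq2: "(p - q)^2 > 0" using qp by simp
    have "4 * sqdist K \<phi> m < \<epsilon>^2 * (p - q)^2" using sq by simp
    then have "4 * sqdist K \<phi> m / (p - q)^2 < \<epsilon>^2" using pq2 by (simp add: pos_divide_less_eq)
    then show ?thesis by simp
  qed
  finally have "sqrt (sqdist K (InvP K p q \<phi>) \<theta>) < sqrt (\<epsilon>^2)" by (rule real_sqrt_less_mono)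
  then show "\<not> sqrt (sqdist K (InvP K p q \<phi>) \<theta>) > \<epsilon>" using eps by simp
qed

lemma mse_Inv:
  assumes "N \<ge> 1"
  shows "measure_pmf.expectation (phi_pmf K p q \<theta> N) (\<lambda>\<phi>. sqdist K (Inv K p q \<phi>) \<theta>) \<le> (1 / (p - q)^2) * real K / real N"
proof -
  have "measure_pmf.expectation (phi_pmf K p q \<theta> N) (\<lambda>\<phi>. sqdist K (Inv K p q \<phi>) \<theta>)
      = measure_pmf.expectation (phi_pmf K p q \<theta> N) (\<lambda>\<phi>. sqdist K \<phi> m) / (p - q)^2"
    by (simp add: Inv_sq)
  also have "\<dots> \<le> (K / (4 * real N)) / (p - q)^2"
    by (rule divide_right_mono) (use E_sqdist[OF assms] in auto)
  also have "\<dots> = ((1 / (p - q)^2) * real K / real N) / 4" by simp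
  also have "\<dots> \<le> (1 / (p - q)^2) * real K / real N"
  proof -
    have "0 \<le> (1 / (p - q)^2) * real K / real N" by simp
    then show ?thesis by (rule quarter_le)
  qed
  finally show ?thesis .
qed

lemma mse_InvP:
  assumes "N \<ge> 1"
  shows "measure_pmf.expectation (phi_pmf K p q \<theta> N) (\<lambda>\<phi>. sqdist K (InvP K p q \<phi>) \<theta>) \<le> (1 / (p - q)^2) * real K / real N"
proof -
  have "measure_pmf.expectation (phi_pmf K p q \<theta> N) (\<lambda>\<phi>. sqdist K (InvP K p q \<phi>) \<theta>)
      \<le> measure_pmf.expectation (phi_pmf K p q \<theta> N) (\<lambda>\<phi>. 4 * (sqdist K \<phi> m / (p - q)^2))"
    by (intro integral_mono int_phi InvP_le)
  also have "\<dots> = 4 * measure_pmf.expectation (phi_pmf K p q \<theta> N) (\<lambda>\<phi>. sqdist K \<phi> m) / (p - q)^2"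
    by simp
  also have "\<dots> \<le> 4 * (K / (4 * real N)) / (p - q)^2"
    by (intro divide_right_mono mult_left_mono) (use E_sqdist[OF assms] in auto)
  also have "\<dots> = (1 / (p - q)^2) * real K / real N" by simp
  finally show ?thesis .
qed

end

theorem theorem9:
  fixes K :: nat and p q :: real
  assumes "K \<ge> 2" and "0 < q" and "q < p" and "p + (real K - 1) * q = 1"
  shows "(\<forall>est \<in> {Inv, InvP, InvN, MLEstar}. \<forall>\<theta> \<in> prob_simplex K. \<forall>\<epsilon>>0.
            (\<lambda>N. measure_pmf.prob (phi_pmf K p q \<theta> N)
                    {\<phi>. sqrt (sqdist K (est K p q \<phi>) \<theta>) > \<epsilon>}) \<longlonglongrightarrow> 0)
       \<and> (\<forall>est \<in> {Inv, InvP}. \<exists>C. \<forall>\<theta> \<in> prob_simplex K. \<forall>N\<ge>1.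
            measure_pmf.expectation (phi_pmf K p q \<theta> N) (\<lambda>\<phi>. sqdist K (est K p q \<phi>) \<theta>)
              \<le> C * real K / real N)"
proof -
  have R: "\<theta> \<in> prob_simplex K \<Longrightarrow> rrsetup K p q \<theta>" for \<theta>
    using assms by (intro rrsetup.intro)
  have c1: "\<forall>\<theta> \<in> prob_simplex K. \<forall>\<epsilon>>0. (\<lambda>N. measure_pmf.prob (phi_pmf K p q \<theta> N)
                    {\<phi>. sqrt (sqdist K (Inv K p q \<phi>) \<theta>) > \<epsilon>}) \<longlonglongrightarrow> 0"
  proof (intro ballI allI impI)
    fix \<theta> :: "nat \<Rightarrow> real" and \<epsilon> :: real assume "\<theta> \<in> prob_simplex K" "\<epsilon> > 0"
    then show "(\<lambda>N. measure_pmf.prob (phi_pmf K p q \<theta> N) {\<phi>. sqrt (sqdist K (Inv K p q \<phi>) \<theta>) > \<epsilon>}) \<longlonglongrightarrow> 0"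
      by (intro rrsetup.cons_Inv[OF R])
  qed
  have c2: "\<forall>\<theta> \<in> prob_simplex K. \<forall>\<epsilon>>0. (\<lambda>N. measure_pmf.prob (phi_pmf K p q \<theta> N)
                    {\<phi>. sqrt (sqdist K (InvP K p q \<phi>) \<theta>) > \<epsilon>}) \<longlonglongrightarrow> 0"
  proof (intro ballI allI impI)
    fix \<theta> :: "nat \<Rightarrow> real" and \<epsilon> :: real assume "\<theta> \<in> prob_simplex K" "\<epsilon> > 0"
    then show "(\<lambda>N. measure_pmf.prob (phi_pmf K p q \<theta> N) {\<phi>. sqrt (sqdist K (InvP K p q \<phi>) \<theta>) > \<epsilon>}) \<longlonglongrightarrow> 0"
      by (intro rrsetup.cons_InvP[OF R])
  qed
  have c3: "\<forall>\<theta> \<in> prob_simplex K. \<forall>\<epsilon>>0. (\<lambda>N. measure_pmf.prob (phi_pmf K p q \<theta> N)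
                    {\<phi>. sqrt (sqdist K (InvN K p q \<phi>) \<theta>) > \<epsilon>}) \<longlonglongrightarrow> 0"
  proof (intro ballI allI impI)
    fix \<theta> :: "nat \<Rightarrow> real" and \<epsilon> :: real assume "\<theta> \<in> prob_simplex K" "\<epsilon> > 0"
    then show "(\<lambda>N. measure_pmf.prob (phi_pmf K p q \<theta> N) {\<phi>. sqrt (sqdist K (InvN K p q \<phi>) \<theta>) > \<epsilon>}) \<longlonglongrightarrow> 0"
      by (intro rrsetup.cons_InvN[OF R])
  qed
  have c4: "\<forall>\<theta> \<in> prob_simplex K. \<forall>\<epsilon>>0. (\<lambda>N. measure_pmf.prob (phi_pmf K p q \<theta> N)
                    {\<phi>. sqrt (sqdist K (MLEstar K p q \<phi>) \<theta>) > \<epsilon>}) \<longlonglongrightarrow> 0"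
  proof (intro ballI allI impI)
    fix \<theta> :: "nat \<Rightarrow> real" and \<epsilon> :: real assume "\<theta> \<in> prob_simplex K" "\<epsilon> > 0"
    then show "(\<lambda>N. measure_pmf.prob (phi_pmf K p q \<theta> N) {\<phi>. sqrt (sqdist K (MLEstar K p q \<phi>) \<theta>) > \<epsilon>}) \<longlonglongrightarrow> 0"
      by (intro rrsetup.cons_MLE[OF R])
  qed
  have m1: "\<exists>C. \<forall>\<theta> \<in> prob_simplex K. \<forall>N\<ge>1.
            measure_pmf.expectation (phi_pmf K p q \<theta> N) (\<lambda>\<phi>. sqdist K (Inv K p q \<phi>) \<theta>)
              \<le> C * real K / real N"
  proof (intro exI[of _ "1 / (p - q)^2"] ballI allI impI)
    fix \<theta> :: "nat \<Rightarrow> real" and N :: nat assume "\<theta> \<in> prob_simplex K" "N \<ge> 1"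
    then show "measure_pmf.expectation (phi_pmf K p q \<theta> N) (\<lambda>\<phi>. sqdist K (Inv K p q \<phi>) \<theta>)
              \<le> (1 / (p - q)^2) * real K / real N"
      by (intro rrsetup.mse_Inv[OF R])
  qed
  have m2: "\<exists>C. \<forall>\<theta> \<in> prob_simplex K. \<forall>N\<ge>1.
            measure_pmf.expectation (phi_pmf K p q \<theta> N) (\<lambda>\<phi>. sqdist K (InvP K p q \<phi>) \<theta>)
              \<le> C * real K / real N"
  proof (intro exI[of _ "1 / (p - q)^2"] ballI allI impI)
    fix \<theta> :: "nat \<Rightarrow> real" and N :: nat assume "\<theta> \<in> prob_simplex K" "N \<ge> 1"
    then show "measure_pmf.expectation (phi_pmf K p q \<theta> N) (\<lambda>\<phi>. sqdist K (InvP K p q \<phi>) \<theta>)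
              \<le> (1 / (p - q)^2) * real K / real N"
      by (intro rrsetup.mse_InvP[OF R])
  qed
  show ?thesis
  proof (rule conjI)
   show "\<forall>est \<in> {Inv, InvP, InvN, MLEstar}. \<forall>\<theta> \<in> prob_simplex K. \<forall>\<epsilon>>0.
            (\<lambda>N. measure_pmf.prob (phi_pmf K p q \<theta> N)
                    {\<phi>. sqrt (sqdist K (est K p q \<phi>) \<theta>) > \<epsilon>}) \<longlonglongrightarrow> 0"
   proof (rule ballI)
    fix est :: "nat \<Rightarrow> real \<Rightarrow> real \<Rightarrow> (nat \<Rightarrow> real) \<Rightarrow> nat \<Rightarrow> real"
    assume "est \<in> {Inv, InvP, InvN, MLEstar}"
    then have "est = Inv \<or> est = InvP \<or> est = InvN \<or> est = MLEstar" by simp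
    then show "\<forall>\<theta> \<in> prob_simplex K. \<forall>\<epsilon>>0. (\<lambda>N. measure_pmf.prob (phi_pmf K p q \<theta> N)
                    {\<phi>. sqrt (sqdist K (est K p q \<phi>) \<theta>) > \<epsilon>}) \<longlonglongrightarrow> 0"
      using c1 c2 c3 c4 by (elim disjE) simp_all
   qed
  next
   show "\<forall>est \<in> {Inv, InvP}. \<exists>C. \<forall>\<theta> \<in> prob_simplex K. \<forall>N\<ge>1.
            measure_pmf.expectation (phi_pmf K p q \<theta> N) (\<lambda>\<phi>. sqdist K (est K p q \<phi>) \<theta>)
              \<le> C * real K / real N"
   proof (rule ballI)
    fix est :: "nat \<Rightarrow> real \<Rightarrow> real \<Rightarrow> (nat \<Rightarrow> real) \<Rightarrow> nat \<Rightarrow> real"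
    assume "est \<in> {Inv, InvP}"
    then have "est = Inv \<or> est = InvP" by simp
    then show "\<exists>C. \<forall>\<theta> \<in> prob_simplex K. \<forall>N\<ge>1.
            measure_pmf.expectation (phi_pmf K p q \<theta> N) (\<lambda>\<phi>. sqdist K (est K p q \<phi>) \<theta>)
              \<le> C * real K / real N"
      using m1 m2 by (elim disjE) simp_all
   qed
  qed
qed

end
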